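(* Let $\{\mathcal N,\gamma,\boldsymbol\ell,\ell^{(2)}\}$ be metric hypersurface data and $p\in\mathcal N$ a point with $\mathrm{Rad}(\gamma|_p)\neq\{0\}$. Then $$\mathrm{sign}(\boldsymbol{\mathcal A}|_p)=\{-1,1\}\sqcup\big(\mathrm{sign}(\gamma|_p)\setminus\{0\}\big),$$ where $\sqcup$ is disjoint union (of multisets). In particular, $\boldsymbol{\mathcal A}|_p$ has Lorentzian signature if and only if $\gamma|_p$ is positive semi-definite.
   Context: Metric hypersurface data: $\mathcal N$ a smooth manifold, $\gamma$ a symmetric $2$-covariant tensor field, $\boldsymbol\ell$ a one-form and $\ell^{(2)}$ a function such that for every $p$ the symmetric bilinear form $\boldsymbol{\mathcal A}|_p((W,a),(Z,b))=\gamma|_p(W,Z)+a\boldsymbol\ell|_p(Z)+b\boldsymbol\ell|_p(W)+ab\,\ell^{(2)}(p)$ on $T_p\mathcal N\times\mathbb R$ is non-degenerate. $\mathrm{Rad}(\gamma|_p)=\{X\in T_p\mathcal N:\gamma|_p(X,\cdot)=0\}$; for such data it is at most one-dimensional. The signature $\mathrm{sign}(q)$ of a quadratic form $q$ is the unordered multiset of diagonal entries ($0$, $-1$, $+1$) of its canonical form; $\mathrm{sign}(\gamma|_p)\setminus\{0\}$ means removing the single $0$ entry. *)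

theory Defs
  imports "HOL-Analysis.Analysis" "HOL-Library.Multiset"
begin

text \<open>Pointwise linear algebra: the tangent space T_pN is modelled by a finite-dimensional
real vector space (type of class euclidean_space); bilinear forms are functions 'a => 'a => real.\<close>

definition sym_bilinear_form :: "('a::euclidean_space \<Rightarrow> 'a \<Rightarrow> real) \<Rightarrow> bool" where
  "sym_bilinear_form B \<longleftrightarrow> bilinear B \<and> (\<forall>x y. B x y = B y x)"

definition canonical_basis :: "('a::euclidean_space \<Rightarrow> 'a \<Rightarrow> real) \<Rightarrow> 'a list \<Rightarrow> bool" where
  "canonical_basis B vs \<longleftrightarrow>
     length vs = DIM('a) \<and> distinct vs \<and> independent (set vs) \<and> span (set vs) = UNIV \<and>
     (\<forall>i<length vs. \<forall>j<length vs. i \<noteq> j \<longrightarrow> B (vs ! i) (vs ! j) = 0) \<and>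
     (\<forall>i<length vs. B (vs ! i) (vs ! i) \<in> {-1, 0, 1})"

definition signature :: "('a::euclidean_space \<Rightarrow> 'a \<Rightarrow> real) \<Rightarrow> real multiset" where
  "signature B = (THE M. \<exists>vs. canonical_basis B vs \<and> M = mset (map (\<lambda>v. B v v) vs))"

text \<open>The bilinear form A on T_pN x R built from hypersurface data at p.\<close>
definition hyp_form ::
  "('a::euclidean_space \<Rightarrow> 'a \<Rightarrow> real) \<Rightarrow> ('a \<Rightarrow> real) \<Rightarrow> real \<Rightarrow> ('a \<times> real) \<Rightarrow> ('a \<times> real) \<Rightarrow> real" where
  "hyp_form g l l2 X Y = g (fst X) (fst Y) + snd X * l (fst Y) + snd Y * l (fst X) + snd X * snd Y * l2"

definition nondegenerate :: "('a::euclidean_space \<Rightarrow> 'a \<Rightarrow> real) \<Rightarrow> bool" where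
  "nondegenerate B \<longleftrightarrow> (\<forall>X. (\<forall>Y. B X Y = 0) \<longrightarrow> X = 0)"

definition radical :: "('a::euclidean_space \<Rightarrow> 'a \<Rightarrow> real) \<Rightarrow> 'a set" where
  "radical B = {X. \<forall>Z. B X Z = 0}"

definition lorentzian_sig :: "real multiset \<Rightarrow> bool" where
  "lorentzian_sig M \<longleftrightarrow> M = add_mset (-1) (replicate_mset (size M - 1) 1)"

end

theory Submission
  imports Defs
begin

definition orth :: "('a::euclidean_space \<Rightarrow> 'a \<Rightarrow> real) \<Rightarrow> 'a set \<Rightarrow> bool" where
  "orth B S \<longleftrightarrow> (\<forall>v\<in>S. \<forall>w\<in>S. v \<noteq> w \<longrightarrow> B v w = 0)"

definition cbs :: "('a::euclidean_space \<Rightarrow> 'a \<Rightarrow> real) \<Rightarrow> 'a set \<Rightarrow> bool" where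
  "cbs B S \<longleftrightarrow> finite S \<and> independent S \<and> span S = UNIV \<and> orth B S \<and> (\<forall>v\<in>S. B v v \<in> {-1,0,1})"

lemma coef_r:
  assumes "bilinear B" "finite S" "orth B S" "v \<in> S"
  shows "B v (\<Sum>w\<in>S. c w *\<^sub>R w) = c v * B v v"
proof -
  have lin: "linear (B v)" using assms(1) by (simp add: bilinear_def)
  have "B v (\<Sum>w\<in>S. c w *\<^sub>R w) = (\<Sum>w\<in>S. c w * B v w)"
    using linear_sum[OF lin, of "\<lambda>w. c w *\<^sub>R w" S] assms(1) by (simp add: bilinear_rmul)
  also have "\<dots> = (\<Sum>w\<in>S. if w = v then c v * B v v else 0)"
    using assms(3,4) unfolding orth_def by (intro sum.cong) auto
  also have "\<dots> = c v * B v v" using assms(2,4) by simp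
  finally show ?thesis .
qed

lemma quad_expand:
  assumes "bilinear B" "finite S" "orth B S"
  shows "B (\<Sum>v\<in>S. c v *\<^sub>R v) (\<Sum>v\<in>S. c v *\<^sub>R v) = (\<Sum>v\<in>S. (c v)^2 * B v v)"
proof -
  have lin: "linear (\<lambda>x. B x y)" for y using assms(1) by (simp add: bilinear_def)
  have "B (\<Sum>v\<in>S. c v *\<^sub>R v) (\<Sum>v\<in>S. c v *\<^sub>R v) = (\<Sum>v\<in>S. c v * B v (\<Sum>v\<in>S. c v *\<^sub>R v))"
    using linear_sum[OF lin, of "\<lambda>v. c v *\<^sub>R v" S "\<Sum>v\<in>S. c v *\<^sub>R v"] assms(1)
    by (simp add: bilinear_lmul)
  also have "\<dots> = (\<Sum>v\<in>S. (c v)^2 * B v v)"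
    using coef_r[OF assms] by (intro sum.cong) (auto simp: power2_eq_square)
  finally show ?thesis .
qed

lemma orth_independent:
  assumes "bilinear B" "finite S" "orth B S" "\<forall>v\<in>S. B v v \<noteq> 0"
  shows "independent S"
  unfolding independent_explicit
proof (intro conjI assms allI impI ballI)
  fix c v assume "(\<Sum>v\<in>S. c v *\<^sub>R v) = 0" "v \<in> S"
  then have "c v * B v v = 0" using coef_r[OF assms(1-3) \<open>v\<in>S\<close>, of c] assms(1)
    by (simp add: bilinear_rzero)
  then show "c v = 0" using assms(4) \<open>v\<in>S\<close> by simp
qed

lemma dim_disjoint:
  fixes U W :: "'a::euclidean_space set"
  assumes "subspace U" "subspace W" "U \<inter> W \<subseteq> {0}"
  shows "dim U + dim W \<le> DIM('a)"
proof -
  have "U \<inter> W = {0}" using assms subspace_0 by blast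
  then have "dim (U \<inter> W) = 0" by simp
  moreover have "dim {x + y |x y. x \<in> U \<and> y \<in> W} \<le> DIM('a)" by (rule dim_subset_UNIV)
  ultimately show ?thesis using dim_sums_Int[OF assms(1,2)] by linarith
qed

lemma polar:
  fixes B :: "'a::real_vector \<Rightarrow> 'a \<Rightarrow> real"
  assumes "bilinear B" "\<forall>x y. B x y = B y x"
  shows "B (x + y) (x + y) = B x x + 2 * B x y + B y y"
proof -
  have "B (x + y) (x + y) = B x x + B x y + (B y x + B y y)"
    using assms(1) by (simp add: bilinear_ladd bilinear_radd)
  then show ?thesis using assms(2)[rule_format, of y x] by simp
qed

lemma exists_cb_sub:
  fixes B :: "'a::euclidean_space \<Rightarrow> 'a \<Rightarrow> real"
  assumes bl: "bilinear B" and sy: "\<forall>x y. B x y = B y x"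
  shows "subspace V \<Longrightarrow> \<exists>S\<subseteq>V. independent S \<and> V \<subseteq> span S \<and> orth B S \<and> (\<forall>v\<in>S. B v v \<in> {-1,0,1})"
proof (induction "dim V" arbitrary: V rule: less_induct)
  case less
  show ?case
  proof (cases "\<forall>x\<in>V. B x x = 0")
    case True
    have z: "B x y = 0" if "x \<in> V" "y \<in> V" for x y
    proof -
      have "x + y \<in> V" using less.prems that by (simp add: subspace_add)
      then show ?thesis using True that polar[OF bl sy, of x y] by simp
    qed
    obtain S where S: "S \<subseteq> V" "independent S" "V \<subseteq> span S" by (metis basis_exists)
    have "orth B S" unfolding orth_def using S(1) z by blast
    then show ?thesis using S True by blast
  next
    case False
    then obtain x where x: "x \<in> V" "B x x \<noteq> 0" by blast
    define v where "v = (1 / sqrt \<bar>B x x\<bar>) *\<^sub>R x"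
    have vV: "v \<in> V" using x less.prems by (simp add: v_def subspace_mul)
    have Bvv: "B v v = B x x / \<bar>B x x\<bar>" using bl x
      by (simp add: v_def bilinear_lmul bilinear_rmul power2_eq_square[symmetric])
    have Bvv1: "B v v \<in> {-1, 1}" using Bvv x(2) by (auto simp: abs_if)
    define V' where "V' = {y\<in>V. B v y = 0}"
    have sV': "subspace V'" unfolding V'_def subspace_def using less.prems bl
      by (auto simp: subspace_def bilinear_radd bilinear_rmul bilinear_rzero)
    have vV': "v \<notin> V'" using Bvv1 V'_def by auto
    have "span V' \<subset> span V"
      using sV' less.prems vV vV' unfolding V'_def span_eq_iff[symmetric]
      by (metis (no_types, lifting) V'_def mem_Collect_eq psubsetI span_eq_iff subsetI)
    then have "dim V' < dim V" by (rule dim_psubset)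
    from less.hyps[OF this sV'] obtain S' where S': "S' \<subseteq> V'" "independent S'" "V' \<subseteq> span S'"
      "orth B S'" "\<forall>v\<in>S'. B v v \<in> {-1,0,1}" by blast
    have spS': "span S' \<subseteq> V'" using S'(1) sV' by (rule span_minimal)
    define S where "S = insert v S'"
    have nv: "v \<notin> span S'" using vV' spS' by blast
    then have "v \<notin> S'" using span_base by blast
    then have "independent S" using S'(2) nv by (simp add: S_def independent_insert)
    moreover note \<open>independent S\<close>
    moreover have "S \<subseteq> V" using S'(1) vV V'_def S_def by auto
    moreover have "V \<subseteq> span S"
    proof
      fix y assume y: "y \<in> V"
      define y' where "y' = y - (B v y / B v v) *\<^sub>R v"
      have "y' \<in> V" using y vV less.prems by (simp add: y'_def subspace_diff subspace_mul)
      moreover have "B v y' = 0" using Bvv1 bl by (auto simp: y'_def bilinear_rsub bilinear_rmul)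
      ultimately have "y' \<in> span S" using S'(3) V'_def S_def span_mono[of S' S] by auto
      moreover have "v \<in> span S" unfolding S_def by (rule span_base) simp
      ultimately have "y' + (B v y / B v v) *\<^sub>R v \<in> span S" by (simp add: span_add span_mul)
      then show "y \<in> span S" by (simp add: y'_def)
    qed
    moreover have "orth B S" using S'(1,4) V'_def sy unfolding orth_def S_def by auto
    moreover have "\<forall>w\<in>S. B w w \<in> {-1,0,1}" using S'(5) Bvv1 S_def by auto
    ultimately show ?thesis by blast
  qed
qed

lemma exists_cbs:
  fixes B :: "'a::euclidean_space \<Rightarrow> 'a \<Rightarrow> real"
  assumes "sym_bilinear_form B"
  shows "\<exists>S. cbs B S"
proof -
  obtain S where S: "independent S" "UNIV \<subseteq> span S" "orth B S" "\<forall>v\<in>S. B v v \<in> {-1,0,1}"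
    using exists_cb_sub[of B UNIV] assms unfolding sym_bilinear_form_def by auto
  then show ?thesis unfolding cbs_def using finiteI_independent by blast
qed

lemma card_cbs:
  fixes S :: "'a::euclidean_space set"
  assumes "cbs B S" shows "card S = DIM('a)"
  using assms dim_span_eq_card_independent[of S] unfolding cbs_def by simp

lemma pos_le:
  fixes B :: "'a::euclidean_space \<Rightarrow> 'a \<Rightarrow> real"
  assumes bl: "bilinear B" and cS: "cbs B S" and cT: "cbs B T"
  shows "card {v\<in>S. B v v = 1} \<le> card {v\<in>T. B v v = 1}"
proof -
  define P where "P = {v\<in>S. B v v = 1}"
  define Q where "Q = {v\<in>T. B v v \<noteq> 1}"
  have fP: "finite P" and fQ: "finite Q" using cS cT unfolding cbs_def P_def Q_def by auto
  have oP: "orth B P" and oQ: "orth B Q" using cS cT unfolding cbs_def P_def Q_def orth_def by auto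
  have "P \<subseteq> S" "Q \<subseteq> T" unfolding P_def Q_def by auto
  then have iP: "independent P" and iQ: "independent Q" using cS cT unfolding cbs_def
    by (meson independent_mono)+
  have "span P \<inter> span Q \<subseteq> {0}"
  proof
    fix x assume x: "x \<in> span P \<inter> span Q"
    obtain c where c: "x = (\<Sum>v\<in>P. c v *\<^sub>R v)" using x span_finite[OF fP] by auto
    obtain d where d: "x = (\<Sum>v\<in>Q. d v *\<^sub>R v)" using x span_finite[OF fQ] by auto
    have "B x x = (\<Sum>v\<in>P. (c v)^2 * B v v)" using quad_expand[OF bl fP oP] c by simp
    also have "\<dots> = (\<Sum>v\<in>P. (c v)^2)" by (intro sum.cong) (auto simp: P_def)
    finally have e1: "B x x = (\<Sum>v\<in>P. (c v)^2)" .
    have "B x x = (\<Sum>v\<in>Q. (d v)^2 * B v v)" using quad_expand[OF bl fQ oQ] d by simp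
    also have "\<dots> \<le> 0"
    proof (intro sum_nonpos)
      fix v assume "v \<in> Q"
      then have "B v v \<le> 0" using cT unfolding Q_def cbs_def by auto
      then show "(d v)^2 * B v v \<le> 0" by (simp add: mult_nonneg_nonpos)
    qed
    finally have "(\<Sum>v\<in>P. (c v)^2) = 0" using e1 sum_nonneg[of P "\<lambda>v. (c v)^2"] by simp
    then have "\<forall>v\<in>P. c v = 0" using sum_nonneg_eq_0_iff[OF fP, of "\<lambda>v. (c v)^2"] by simp
    then have "x = 0" using c by simp
    then show "x \<in> {0}" by simp
  qed
  then have "dim (span P) + dim (span Q) \<le> DIM('a)"
    by (intro dim_disjoint) auto
  then have le: "card P + card Q \<le> DIM('a)" using dim_eq_card_independent[OF iP] dim_eq_card_independent[OF iQ] by simp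
  have fT: "finite T" using cT cbs_def by auto
  have "card T = card {v\<in>T. B v v = 1} + card Q"
  proof -
    have "T = {v\<in>T. B v v = 1} \<union> Q" unfolding Q_def by auto
    moreover have "{v\<in>T. B v v = 1} \<inter> Q = {}" unfolding Q_def by auto
    ultimately show ?thesis using fT card_Un_disjoint[of "{v\<in>T. B v v = 1}" Q]
      by (metis (no_types, lifting) fQ finite_Un)
  qed
  then show ?thesis using le card_cbs[OF cT] P_def by simp
qed

lemma bilinear_neg:
  assumes "bilinear B" shows "bilinear (\<lambda>x y. - B x y)"
  using assms unfolding bilinear_def linear_iff by auto

lemma cbs_neg: "cbs B S \<Longrightarrow> cbs (\<lambda>x y. - B x y) S"
  unfolding cbs_def orth_def by auto

lemma count_img:
  assumes "finite S"
  shows "count (image_mset f (mset_set S)) r = card {v\<in>S. f v = r}"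
proof -
  have "count (image_mset f (mset_set S)) r = (\<Sum>y\<in>f -` {r} \<inter> S. 1)"
    unfolding count_image_mset using assms by (intro sum.cong) auto
  also have "\<dots> = card (f -` {r} \<inter> S)" by simp
  also have "f -` {r} \<inter> S = {v\<in>S. f v = r}" by auto
  finally show ?thesis .
qed

lemma card_part3:
  fixes B :: "'a::euclidean_space \<Rightarrow> 'a \<Rightarrow> real"
  assumes "cbs B S"
  shows "card S = card {v\<in>S. B v v = 1} + card {v\<in>S. B v v = -1} + card {v\<in>S. B v v = 0}"
proof -
  have f: "finite S" using assms cbs_def by auto
  have "S = ({v\<in>S. B v v = 1} \<union> {v\<in>S. B v v = -1}) \<union> {v\<in>S. B v v = 0}"
    using assms unfolding cbs_def by auto
  then have "card S = card ({v\<in>S. B v v = 1} \<union> {v\<in>S. B v v = -1}) + card {v\<in>S. B v v = 0}"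
    using f by (subst card_Un_disjoint[symmetric]) auto
  also have "card ({v\<in>S. B v v = 1} \<union> {v\<in>S. B v v = -1}) = card {v\<in>S. B v v = 1} + card {v\<in>S. B v v = -1}"
    using f by (intro card_Un_disjoint) auto
  finally show ?thesis .
qed

lemma cbs_same:
  fixes B :: "'a::euclidean_space \<Rightarrow> 'a \<Rightarrow> real"
  assumes bl: "bilinear B" and cS: "cbs B S" and cT: "cbs B T"
  shows "image_mset (\<lambda>v. B v v) (mset_set S) = image_mset (\<lambda>v. B v v) (mset_set T)"
proof (rule multiset_eqI)
  fix r
  have fS: "finite S" and fT: "finite T" using cS cT cbs_def by auto
  have p: "card {v\<in>S. B v v = 1} = card {v\<in>T. B v v = 1}"
    using pos_le[OF bl cS cT] pos_le[OF bl cT cS] by simp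
  have n: "card {v\<in>S. B v v = -1} = card {v\<in>T. B v v = -1}"
    using pos_le[OF bilinear_neg[OF bl] cbs_neg[OF cS] cbs_neg[OF cT]]
      pos_le[OF bilinear_neg[OF bl] cbs_neg[OF cT] cbs_neg[OF cS]]
    by (simp add: minus_equation_iff eq_commute[of "-1::real"])
  have z: "card {v\<in>S. B v v = 0} = card {v\<in>T. B v v = 0}"
    using card_part3[OF cS] card_part3[OF cT] card_cbs[OF cS] card_cbs[OF cT] p n by simp
  have "card {v\<in>S. B v v = r} = card {v\<in>T. B v v = r}"
  proof (cases "r \<in> {-1,0,1}")
    case True then show ?thesis using p n z by auto
  next
    case False
    then have e: "{v\<in>S. B v v = r} = {}" "{v\<in>T. B v v = r} = {}" using cS cT unfolding cbs_def by auto
    show ?thesis unfolding e ..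
  qed
  then show "count (image_mset (\<lambda>v. B v v) (mset_set S)) r = count (image_mset (\<lambda>v. B v v) (mset_set T)) r"
    by (simp only: count_img[OF fS] count_img[OF fT])
qed

lemma cb_iff:
  fixes B :: "'a::euclidean_space \<Rightarrow> 'a \<Rightarrow> real"
  shows "canonical_basis B vs \<longleftrightarrow> distinct vs \<and> cbs B (set vs)"
proof
  assume a: "canonical_basis B vs"
  have "orth B (set vs)" unfolding orth_def
  proof (intro ballI impI)
    fix v w assume "v \<in> set vs" "w \<in> set vs" "v \<noteq> w"
    then obtain i j where "i < length vs" "j < length vs" "v = vs ! i" "w = vs ! j" "i \<noteq> j"
      by (metis in_set_conv_nth)
    then show "B v w = 0" using a unfolding canonical_basis_def by blast
  qed
  moreover have "\<forall>v\<in>set vs. B v v \<in> {-1,0,1}" using a unfolding canonical_basis_def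
    by (metis in_set_conv_nth)
  ultimately show "distinct vs \<and> cbs B (set vs)" using a unfolding canonical_basis_def cbs_def by auto
next
  assume a: "distinct vs \<and> cbs B (set vs)"
  have "length vs = DIM('a)" using a card_cbs distinct_card by metis
  moreover have "\<forall>i<length vs. \<forall>j<length vs. i \<noteq> j \<longrightarrow> B (vs ! i) (vs ! j) = 0"
    using a unfolding cbs_def orth_def by (metis nth_eq_iff_index_eq nth_mem)
  moreover have "\<forall>i<length vs. B (vs ! i) (vs ! i) \<in> {-1,0,1}" using a unfolding cbs_def by auto
  ultimately show "canonical_basis B vs" using a unfolding canonical_basis_def cbs_def by auto
qed

lemma sig_cbs:
  fixes B :: "'a::euclidean_space \<Rightarrow> 'a \<Rightarrow> real"
  assumes bl: "bilinear B" and cS: "cbs B S"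
  shows "signature B = image_mset (\<lambda>v. B v v) (mset_set S)"
  unfolding signature_def
proof (rule the_equality)
  have "finite S" using cS cbs_def by auto
  then obtain vs where vs: "set vs = S" "distinct vs" using finite_distinct_list by blast
  then have "canonical_basis B vs" using cb_iff cS by blast
  moreover have "image_mset (\<lambda>v. B v v) (mset_set S) = mset (map (\<lambda>v. B v v) vs)"
    by (metis vs mset_set_set mset_map)
  ultimately show "\<exists>vs. canonical_basis B vs \<and> image_mset (\<lambda>v. B v v) (mset_set S) = mset (map (\<lambda>v. B v v) vs)"
    by blast
next
  fix M assume "\<exists>vs. canonical_basis B vs \<and> M = mset (map (\<lambda>v. B v v) vs)"
  then obtain vs where vs: "canonical_basis B vs" "M = mset (map (\<lambda>v. B v v) vs)" by blast
  then have d: "distinct vs" "cbs B (set vs)" using cb_iff by blast+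
  have "M = image_mset (\<lambda>v. B v v) (mset_set (set vs))" using vs(2) d(1) by (simp add: mset_set_set)
  then show "M = image_mset (\<lambda>v. B v v) (mset_set S)" using cbs_same[OF bl d(2) cS] by simp
qed

lemma hyp_bilinear:
  assumes bl: "bilinear g" and lin: "linear l"
  shows "bilinear (hyp_form g l l2)"
proof -
  have la: "l (x + y) = l x + l y" and lm: "l (c *\<^sub>R x) = c * l x" for x y c
    using lin by (auto simp: linear_iff)
  show ?thesis unfolding bilinear_def linear_iff hyp_form_def
    using bl by (auto simp: la lm bilinear_ladd bilinear_radd bilinear_lmul bilinear_rmul algebra_simps)
qed

lemma hyp_sym:
  assumes "\<forall>x y. g x y = g y x"
  shows "hyp_form g l l2 X Y = hyp_form g l l2 Y X"
  using assms unfolding hyp_form_def by (simp add: algebra_simps)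

theorem lemma2p3:
  fixes g :: "'a::euclidean_space \<Rightarrow> 'a \<Rightarrow> real"
    and l :: "'a \<Rightarrow> real"
    and l2 :: real
  assumes "sym_bilinear_form g"
    and "linear l"
    and "nondegenerate (hyp_form g l l2)"
    and "radical g \<noteq> {0}"
  shows "signature (hyp_form g l l2) = {#-1, 1#} + (signature g - {#0#})
         \<and> (lorentzian_sig (signature (hyp_form g l l2)) \<longleftrightarrow> (\<forall>x. g x x \<ge> 0))"
proof -
  define A where "A = hyp_form g l l2"
  have bl: "bilinear g" and sy: "\<forall>x y. g x y = g y x" using assms(1) sym_bilinear_form_def by auto
  have Abl: "bilinear A" unfolding A_def using hyp_bilinear[OF bl assms(2)] .
  have Asy: "A X Y = A Y X" for X Y unfolding A_def using hyp_sym[OF sy] .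
  have nd: "\<And>X. (\<forall>Y. A X Y = 0) \<Longrightarrow> X = 0" using assms(3) unfolding A_def nondegenerate_def by blast
  have la: "l (x + y) = l x + l y" and lm: "l (c *\<^sub>R x) = c * l x" for x y c
    using assms(2) by (auto simp: linear_iff)
  have Aemb: "A (X, a) (Y, b) = g X Y + a * l Y + b * l X + a * b * l2" for X Y a b
    unfolding A_def hyp_form_def by simp
  obtain S where cS: "cbs g S" using exists_cbs[OF assms(1)] by blast
  have fS: "finite S" and iS: "independent S" and spS: "span S = UNIV" and oS: "orth g S"
    and vS: "\<forall>v\<in>S. g v v \<in> {-1,0,1}" using cS unfolding cbs_def by auto
  have expand: "\<exists>c. x = (\<Sum>v\<in>S. c v *\<^sub>R v)" for x
    using span_finite[OF fS] spS by auto
  define Z where "Z = {v\<in>S. g v v = 0}"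
  define E where "E = {v\<in>S. g v v \<noteq> 0}"
  have radZ: "g z Y = 0" if "z \<in> Z" for z Y
  proof -
    obtain c where "Y = (\<Sum>v\<in>S. c v *\<^sub>R v)" using expand by blast
    then show ?thesis using coef_r[OF bl fS oS, of z c] that Z_def by simp
  qed
  have Zne: "Z \<noteq> {}"
  proof
    assume Z0: "Z = {}"
    obtain x where x: "x \<in> radical g" "x \<noteq> 0" using assms(4) bilinear_lzero[OF bl] unfolding radical_def by blast
    obtain c where c: "x = (\<Sum>v\<in>S. c v *\<^sub>R v)" using expand by blast
    have "c v = 0" if "v \<in> S" for v
    proof -
      have "g v x = 0" using x(1) sy unfolding radical_def by simp
      then have "c v * g v v = 0" using coef_r[OF bl fS oS that, of c] c by simp
      moreover have "g v v \<noteq> 0" using Z0 that Z_def by auto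
      ultimately show ?thesis by simp
    qed
    then show False using c x(2) by simp
  qed
  have Zsub: "z1 = z2" if "z1 \<in> Z" "z2 \<in> Z" for z1 z2
  proof (rule ccontr)
    assume ne: "z1 \<noteq> z2"
    define X where "X = (if l z1 = 0 then z1 else l z2 *\<^sub>R z1 - l z1 *\<^sub>R z2)"
    have ld: "l (x - y) = l x - l y" for x y using linear_diff[OF assms(2)] .
    have lX: "l X = 0" unfolding X_def by (simp add: ld lm)
    have gX: "g X Y = 0" for Y unfolding X_def using radZ[OF that(1)] radZ[OF that(2)] bl
      by (auto simp: bilinear_lsub bilinear_lmul)
    have "A (X, 0) Y = 0" for Y using Aemb[of X 0 "fst Y" "snd Y"] gX lX by simp
    then have "(X, 0::real) = 0" using nd by blast
    then have X0: "X = 0" by (simp add: zero_prod_def)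
    have z1S: "z1 \<in> S" and z2S: "z2 \<in> S" using that Z_def by auto
    show False
    proof (cases "l z1 = 0")
      case True
      then have "z1 = 0" using X0 X_def by simp
      then show False using iS z1S dependent_zero by blast
    next
      case False
      then have "l z2 *\<^sub>R z1 = l z1 *\<^sub>R z2" using X0 X_def by simp
      then have "(1 / l z1) *\<^sub>R (l z2 *\<^sub>R z1) = (1 / l z1) *\<^sub>R (l z1 *\<^sub>R z2)" by simp
      also have "\<dots> = z2" using False by simp
      finally have z2e: "(1 / l z1) *\<^sub>R (l z2 *\<^sub>R z1) = z2" .
      have "z1 \<in> span (S - {z2})" using z1S ne by (intro span_base) auto
      then have "(1 / l z1) *\<^sub>R (l z2 *\<^sub>R z1) \<in> span (S - {z2})" by (intro span_mul)
      then have "z2 \<in> span (S - {z2})" unfolding z2e .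
      then show False using iS z2S dependent_def by blast
    qed
  qed
  obtain n where Zn: "Z = {n}" using Zne Zsub by blast
  have nS: "n \<in> S" and gnn: "g n n = 0" using Zn Z_def by auto
  have gn: "g n Y = 0" "g Y n = 0" for Y using radZ[of n Y] Zn sy by auto
  have SE: "S = insert n E" and nE: "n \<notin> E" using Zn nS gnn unfolding Z_def E_def by auto
  have fE: "finite E" using fS E_def by auto
  have oE: "orth g E" using oS unfolding orth_def E_def by auto
  have vE: "g e e = 1 \<or> g e e = -1" if "e \<in> E" for e using vS that E_def by auto
  have gsq: "g e e * g e e = 1" if "e \<in> E" for e using vE[OF that] by auto
  define c where "c = l n"
  have c0: "c \<noteq> 0"
  proof
    assume "c = 0"
    then have "A (n, 0) Y = 0" for Y using Aemb[of n 0 "fst Y" "snd Y"] gn c_def by simp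
    then have "(n, 0::real) = 0" using nd by blast
    then have "n = 0" by (simp add: zero_prod_def)
    then show False using iS nS dependent_zero by blast
  qed
  define sv where "sv = (\<Sum>f\<in>E. (g f f * l f) *\<^sub>R f)"
  define T0 where "T0 = (- sv, 1::real)"
  define N where "N = (n, 0::real)"
  define d where "d = A T0 T0"
  define k where "k = d / (2 * c)"
  define w where "w = T0 - k *\<^sub>R N"
  define u where "u = (1 / c) *\<^sub>R N"
  define p where "p = (1 / sqrt 2) *\<^sub>R (u + w)"
  define q where "q = (1 / sqrt 2) *\<^sub>R (u - w)"
  define emb where "emb = (\<lambda>e::'a. (e, 0::real))"
  have gesv: "g e sv = l e" if "e \<in> E" for e
    using coef_r[OF bl fE oE that, of "\<lambda>f. g f f * l f"] gsq[OF that] unfolding sv_def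
    by (simp add: algebra_simps)
  have ee: "A (emb e) (emb f) = g e f" for e f unfolding emb_def Aemb by simp
  have eT: "A (emb e) T0 = 0" if "e \<in> E" for e
    unfolding emb_def T0_def Aemb using gesv[OF that] bl by (simp add: bilinear_rneg)
  have NT: "A N T0 = c" unfolding N_def T0_def Aemb c_def using gn by simp
  have NN: "A N N = 0" unfolding N_def Aemb using gnn by simp
  have eN: "A (emb e) N = 0" for e unfolding N_def emb_def Aemb using gn by simp
  have ww: "A w w = 0" unfolding w_def using Abl Asy[of N T0] NT NN c0
    by (simp add: bilinear_lsub bilinear_rsub bilinear_lmul bilinear_rmul d_def k_def)
  have uw: "A u w = 1" unfolding w_def u_def using Abl NT NN c0
    by (simp add: bilinear_lsub bilinear_rsub bilinear_lmul bilinear_rmul)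
  have uu: "A u u = 0" unfolding u_def using Abl NN
    by (simp add: bilinear_lmul bilinear_rmul)
  have eu: "A (emb e) u = 0" for e unfolding u_def using Abl eN by (simp add: bilinear_rmul)
  have ew: "A (emb e) w = 0" if "e \<in> E" for e unfolding w_def using Abl eN eT[OF that]
    by (simp add: bilinear_rsub bilinear_rmul)
  have wu: "A w u = 1" using uw Asy by simp
  have s2: "(1 / sqrt 2) * (1 / sqrt 2) = (1/2::real)" by (simp add: divide_simps)
  have pp: "A p p = 1" unfolding p_def using Abl uu uw wu ww s2
    by (simp add: bilinear_ladd bilinear_radd bilinear_lmul bilinear_rmul)
  have qq: "A q q = -1" unfolding q_def using Abl uu uw wu ww s2
    by (simp add: bilinear_lsub bilinear_rsub bilinear_lmul bilinear_rmul)
  have pq: "A p q = 0" unfolding p_def q_def using Abl uu uw wu ww s2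
    by (simp add: bilinear_ladd bilinear_rsub bilinear_lmul bilinear_rmul)
  have ep: "A (emb e) p = 0" if "e \<in> E" for e unfolding p_def using Abl eu ew[OF that]
    by (simp add: bilinear_radd bilinear_rmul)
  have eq: "A (emb e) q = 0" if "e \<in> E" for e unfolding q_def using Abl eu ew[OF that]
    by (simp add: bilinear_rsub bilinear_rmul)
  define S' where "S' = insert p (insert q (emb ` E))"
  have pE: "p \<notin> emb ` E"
  proof
    assume "p \<in> emb ` E"
    then obtain e where "e \<in> E" "p = emb e" by blast
    then have "A p p = 0" using ep by simp
    then show False using pp by simp
  qed
  have qE: "q \<notin> emb ` E"
  proof
    assume "q \<in> emb ` E"
    then obtain e where "e \<in> E" "q = emb e" by blast
    then have "A q q = 0" using eq by simp
    then show False using qq by simp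
  qed
  have pqne: "p \<noteq> q" using pq pp by auto
  have injE: "inj_on emb E" unfolding emb_def inj_on_def by simp
  have fS': "finite S'" using fE S'_def by simp
  have oS': "orth A S'" unfolding orth_def S'_def
  proof (intro ballI impI)
    fix x y assume x: "x \<in> insert p (insert q (emb ` E))" and y: "y \<in> insert p (insert q (emb ` E))"
      and xy: "x \<noteq> y"
    show "A x y = 0"
    proof -
      { fix e f assume "e \<in> E" "f \<in> E" "x = emb e" "y = emb f"
        then have "A x y = 0" using xy oE unfolding orth_def by (auto simp: ee) }
      moreover { fix e assume "e \<in> E" "x = emb e" "y = p \<or> y = q"
        then have "A x y = 0" using ep eq by auto }
      moreover { fix e assume "e \<in> E" "y = emb e" "x = p \<or> x = q"
        then have "A x y = 0" using ep eq Asy[of x y] by auto }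
      moreover { assume "x = p \<or> x = q" "y = p \<or> y = q"
        then have "A x y = 0" using xy pq Asy[of q p] by auto }
      ultimately show ?thesis using x y by blast
    qed
  qed
  have vS': "\<forall>v\<in>S'. A v v \<in> {-1, 1}" unfolding S'_def using pp qq ee vE by auto
  have iS': "independent S'" using orth_independent[OF Abl fS' oS'] vS' by force
  have cardE: "card E = DIM('a) - 1" using card_cbs[OF cS] SE nE fE by simp
  have cardS': "card S' = DIM('a \<times> real)"
    using pE qE pqne fE card_image[OF injE] cardE DIM_positive[where 'a='a] unfolding S'_def by simp
  have spS': "span S' = UNIV" using card_ge_dim_independent[of S' UNIV] iS' cardS' by auto
  have cS': "cbs A S'" unfolding cbs_def using fS' iS' spS' oS' vS' by auto
  define R where "R = image_mset (\<lambda>e. g e e) (mset_set E)"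
  have sigA: "signature A = add_mset 1 (add_mset (-1) R)"
  proof -
    have "signature A = image_mset (\<lambda>v. A v v) (mset_set S')" using sig_cbs[OF Abl cS'] .
    also have "mset_set S' = add_mset p (add_mset q (mset_set (emb ` E)))"
      using pE qE pqne fE unfolding S'_def by simp
    also have "mset_set (emb ` E) = image_mset emb (mset_set E)" using image_mset_mset_set[OF injE] by simp
    finally show ?thesis using pp qq unfolding R_def by (simp add: ee multiset.map_comp comp_def)
  qed
  have sigg: "signature g = add_mset 0 R"
  proof -
    have "signature g = image_mset (\<lambda>v. g v v) (mset_set S)" using sig_cbs[OF bl cS] .
    also have "mset_set S = add_mset n (mset_set E)" using SE nE fE by simp
    finally show ?thesis using gnn unfolding R_def by simp
  qed
  have part1: "signature A = {#-1, 1#} + (signature g - {#0#})"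
    unfolding sigA sigg by simp
  have sizeR: "size R = card E" unfolding R_def by simp
  have lor: "lorentzian_sig (signature A) \<longleftrightarrow> R = replicate_mset (card E) 1"
    unfolding lorentzian_sig_def sigA using sizeR by auto
  have R1: "R = replicate_mset (card E) 1 \<longleftrightarrow> (\<forall>e\<in>E. g e e = 1)"
  proof
    assume "R = replicate_mset (card E) 1"
    then show "\<forall>e\<in>E. g e e = 1" unfolding R_def using fE
      by (metis (no_types, lifting) image_eqI finite_set_mset_mset_set in_replicate_mset multiset.set_map)
  next
    assume "\<forall>e\<in>E. g e e = 1"
    then have "set_mset R \<subseteq> {1}" unfolding R_def using fE by auto
    then show "R = replicate_mset (card E) 1" using set_mset_subset_singletonD sizeR by metis
  qed
  have psd: "(\<forall>e\<in>E. g e e = 1) \<longleftrightarrow> (\<forall>x. g x x \<ge> 0)"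
  proof
    assume h: "\<forall>e\<in>E. g e e = 1"
    show "\<forall>x. g x x \<ge> 0"
    proof
      fix x
      obtain cc where cc: "x = (\<Sum>v\<in>S. cc v *\<^sub>R v)" using expand by blast
      have "g x x = (\<Sum>v\<in>S. (cc v)^2 * g v v)" using quad_expand[OF bl fS oS] cc by simp
      also have "\<dots> \<ge> 0"
      proof (intro sum_nonneg)
        fix v assume "v \<in> S"
        then have "g v v \<ge> 0" using h E_def by (cases "g v v = 0") auto
        then show "(cc v)^2 * g v v \<ge> 0" by simp
      qed
      finally show "g x x \<ge> 0" .
    qed
  next
    assume h: "\<forall>x. g x x \<ge> 0"
    show "\<forall>e\<in>E. g e e = 1"
    proof
      fix e assume "e \<in> E"
      then show "g e e = 1" using vE[of e] h[rule_format, of e] by linarith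
    qed
  qed
  show ?thesis using part1 lor R1 psd unfolding A_def by simp
qed

end
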